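(* Assume $\bar p=\mu\cdot\mathbf p=1/2$ and let $\mathbf r,\tilde{\mathbf r}$ be as in the context. Then $\mathbf r+\tilde{\mathbf r}=(\mu\cdot(\mathbf r+\tilde{\mathbf r}))\mathbf 1$; in particular $\mathbf r+\tilde{\mathbf r}$ is a constant multiple of $\mathbf 1$.
   Context: Let $\mathcal R=\{1,\dots,N\}$ and let $K$ be a stochastic matrix on $\mathcal R$ whose Markov chain has a unique closed irreducible subset; let $\mu$ (row vector) be its unique stationary distribution. Fix $p:\mathcal R\to(0,1)$, $\mathbf p=(p(1),\dots,p(N))^t$, $\mathbf 1$ the all-ones column vector, $I$ the identity, $D_p$ the diagonal matrix with entries $p(i)$, $D_{1-p}=I-D_p$. Define $\mathbf r=(I-K+2(\mathbf 1-\mathbf p)\mu D_{1-p}K)^{-1}\mathbf p-\mathbf 1$ and $\tilde{\mathbf r}=(I-K+2\mathbf p\,\mu D_pK)^{-1}(\mathbf 1-\mathbf p)-\mathbf 1$. *)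

theory Defs
  imports "HOL-Analysis.Analysis"
begin

definition stochastic :: "real^'n^'n \<Rightarrow> bool" where
  "stochastic K \<longleftrightarrow> (\<forall>i j. K$i$j \<ge> 0) \<and> (\<forall>i. (\<Sum>j\<in>UNIV. K$i$j) = 1)"

definition trans_rel :: "real^'n^'n \<Rightarrow> ('n \<times> 'n) set" where
  "trans_rel K = {(i,j). K$i$j > 0}"

definition closed_irreducible :: "real^'n^'n \<Rightarrow> 'n set \<Rightarrow> bool" where
  "closed_irreducible K C \<longleftrightarrow> C \<noteq> {} \<and>
     (\<forall>i\<in>C. \<forall>j. K$i$j > 0 \<longrightarrow> j \<in> C) \<and>
     (\<forall>i\<in>C. \<forall>j\<in>C. (i,j) \<in> (trans_rel K)\<^sup>*)"

definition stationary_distribution :: "real^'n^'n \<Rightarrow> real^'n \<Rightarrow> bool" where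
  "stationary_distribution K mu \<longleftrightarrow> (\<forall>i. mu$i \<ge> 0) \<and> (\<Sum>i\<in>UNIV. mu$i) = 1 \<and> mu v* K = mu"

definition diag_mat :: "real^'n \<Rightarrow> real^'n^'n" where
  "diag_mat v = (\<chi> i j. if i = j then v$i else 0)"

definition outer :: "real^'n \<Rightarrow> real^'n \<Rightarrow> real^'n^'n" where
  "outer u w = (\<chi> i j. u$i * w$j)"

definition ones :: "real^'n" where "ones = (\<chi> i. 1)"

definition r_vec :: "real^'n^'n \<Rightarrow> real^'n \<Rightarrow> real^'n \<Rightarrow> real^'n" where
  "r_vec K mu p = matrix_inv (mat 1 - K + 2 *\<^sub>R outer (ones - p) (mu v* (diag_mat (ones - p) ** K))) *v p - ones"

definition r_tilde_vec :: "real^'n^'n \<Rightarrow> real^'n \<Rightarrow> real^'n \<Rightarrow> real^'n" where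
  "r_tilde_vec K mu p = matrix_inv (mat 1 - K + 2 *\<^sub>R outer p (mu v* (diag_mat p ** K))) *v (ones - p) - ones"

end

theory Submission
  imports Defs
begin

lemma outer_mv: "outer u w *v x = (w \<bullet> x) *\<^sub>R u"
  by (simp add: vec_eq_iff matrix_vector_mult_def outer_def inner_vec_def sum_distrib_left
      mult.commute mult.left_commute)

lemma diag_mv: "diag_mat v *v x = (\<chi> i. v$i * x$i)"
proof -
  have "(\<Sum>j\<in>UNIV. (if i = j then v$i else 0) * x$j) = (\<Sum>j\<in>UNIV. if i = j then v$i * x$j else 0)" for i
    by (rule sum.cong) auto
  then show ?thesis by (simp add: vec_eq_iff matrix_vector_mult_def diag_mat_def)
qed

lemma stoch_ones: "stochastic K \<Longrightarrow> K *v ones = ones"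
  by (simp add: vec_eq_iff matrix_vector_mult_def ones_def stochastic_def)

lemma mu_ones: "stationary_distribution K mu \<Longrightarrow> mu \<bullet> ones = 1"
  by (simp add: stationary_distribution_def inner_vec_def ones_def)

lemma mu_K: "stationary_distribution K mu \<Longrightarrow> mu \<bullet> (K *v x) = mu \<bullet> x"
  by (metis dot_lmul_matrix stationary_distribution_def)

lemma max_step:
  fixes K :: "real^'n^'n"
  assumes st: "stochastic K" and hfx: "K *v z = z" and mx: "\<forall>j. z$j \<le> z$i" and pos: "K$i$j > 0"
  shows "z$j = z$i"
proof -
  have "(\<Sum>k\<in>UNIV. K$i$k * (z$i - z$k)) = z$i * (\<Sum>k\<in>UNIV. K$i$k) - (\<Sum>k\<in>UNIV. K$i$k * z$k)"
    by (simp add: algebra_simps sum_subtractf sum_distrib_left)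
  also have "\<dots> = 0"
    using st hfx by (simp add: stochastic_def vec_eq_iff matrix_vector_mult_def)
  finally have s0: "(\<Sum>k\<in>UNIV. K$i$k * (z$i - z$k)) = 0" .
  have nn: "\<And>k. k \<in> UNIV \<Longrightarrow> 0 \<le> K$i$k * (z$i - z$k)"
    using st mx by (simp add: stochastic_def)
  have "(\<Sum>k\<in>UNIV. K$i$k * (z$i - z$k)) = 0 \<longleftrightarrow> (\<forall>k\<in>UNIV. K$i$k * (z$i - z$k) = 0)"
    by (rule sum_nonneg_eq_0_iff) (auto intro: nn)
  then have "K$i$j * (z$i - z$j) = 0"
    using s0 by blast
  with pos show ?thesis by simp
qed

lemma closed_rtrancl:
  assumes cl: "\<forall>i\<in>S. \<forall>j. K$i$j > 0 \<longrightarrow> j \<in> S" and r: "(i,j) \<in> (trans_rel K)\<^sup>*" and i: "i \<in> S"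
  shows "j \<in> S"
  using r i
proof (induction rule: rtrancl_induct)
  case base then show ?case by simp
next
  case (step y z) then show ?case using cl by (auto simp: trans_rel_def)
qed

lemma exists_ci:
  fixes K :: "real^'n^'n"
  assumes cl: "\<forall>i\<in>S. \<forall>j. K$i$j > 0 \<longrightarrow> j \<in> S" and ne: "i0 \<in> S"
  shows "\<exists>C. C \<subseteq> S \<and> closed_irreducible K C"
proof -
  define reach where "reach i = {j. (i,j) \<in> (trans_rel K)\<^sup>*}" for i
  obtain i where iS: "i \<in> S" and mn: "\<forall>y. y \<in> S \<longrightarrow> card (reach i) \<le> card (reach y)"
    using ex_has_least_nat[of "\<lambda>x. x \<in> S" i0 "\<lambda>x. card (reach x)"] ne by blast
  have sub: "reach i \<subseteq> S" using closed_rtrancl[OF cl _ iS] by (auto simp: reach_def)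
  have eq: "reach j = reach i" if "j \<in> reach i" for j
  proof -
    have "reach j \<subseteq> reach i" using that by (auto simp: reach_def)
    moreover have "card (reach i) \<le> card (reach j)" using mn sub that by auto
    ultimately show ?thesis by (metis card_seteq finite)
  qed
  have "closed_irreducible K (reach i)"
    unfolding closed_irreducible_def
  proof (intro conjI ballI allI impI)
    show "reach i \<noteq> {}" by (auto simp: reach_def)
  next
    fix a b assume "a \<in> reach i" "K$a$b > 0"
    then show "b \<in> reach i"
      by (auto simp: reach_def trans_rel_def intro: rtrancl_into_rtrancl)
  next
    fix a b assume a: "a \<in> reach i" and b: "b \<in> reach i"
    then have "b \<in> reach a" using eq[OF a] by simp
    then show "(a,b) \<in> (trans_rel K)\<^sup>*" by (simp add: reach_def)
  qed
  with sub show ?thesis by blast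
qed

lemma max_ci:
  fixes K :: "real^'n^'n"
  assumes st: "stochastic K" and hfx: "K *v z = z"
  shows "\<exists>C. C \<subseteq> {i. \<forall>j. z$j \<le> z$i} \<and> closed_irreducible K C"
proof -
  define M where "M = Max (range (\<lambda>j. z$j))"
  have fin: "finite (range (\<lambda>j. z$j))" by simp
  have "M \<in> range (\<lambda>j. z$j)" unfolding M_def using fin by (rule Max_in) simp
  then obtain i where iM: "z$i = M" by blast
  have i: "\<forall>j. z$j \<le> z$i"
  proof
    fix j show "z$j \<le> z$i" unfolding iM M_def using fin by (rule Max_ge) simp
  qed
  show ?thesis
  proof (rule exists_ci)
    show "i \<in> {i. \<forall>j. z$j \<le> z$i}" using i by simp
    show "\<forall>i\<in>{i. \<forall>j. z$j \<le> z$i}. \<forall>j. 0 < K$i$j \<longrightarrow> j \<in> {i. \<forall>j. z$j \<le> z$i}"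
    proof (intro ballI allI impI)
      fix a b assume a: "a \<in> {i. \<forall>j. z$j \<le> z$i}" and pos: "0 < K$a$b"
      have am: "\<forall>j. z$j \<le> z$a" using a by simp
      have "z$b = z$a" by (rule max_step[OF st hfx am pos])
      then show "b \<in> {i. \<forall>j. z$j \<le> z$i}" using am by simp
    qed
  qed
qed

lemma kernel_const:
  fixes K :: "real^'n^'n"
  assumes st: "stochastic K" and u: "\<exists>!C. closed_irreducible K C" and hfx: "K *v z = z"
  shows "\<exists>c. z = c *\<^sub>R ones"
proof -
  obtain C1 where C1: "C1 \<subseteq> {i. \<forall>j. z$j \<le> z$i}" "closed_irreducible K C1"
    using max_ci[OF st hfx] by blast
  have hfx2: "K *v (-z) = -z" using hfx
    by (metis matrix_vector_mult_scaleR scaleR_minus1_left)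
  obtain C2 where C2: "C2 \<subseteq> {i. \<forall>j. (-z)$j \<le> (-z)$i}" "closed_irreducible K C2"
    using max_ci[OF st hfx2] by blast
  have "C1 = C2" using u C1 C2 by blast
  obtain c where c: "c \<in> C1" using C1 by (auto simp: closed_irreducible_def)
  have "\<forall>j. z$j \<le> z$c" "\<forall>j. (-z)$j \<le> (-z)$c" using C1 C2 \<open>C1 = C2\<close> c by auto
  then have "\<forall>j. z$j = z$c" by (metis antisym neg_le_iff_le vector_uminus_component)
  then have "z = (z$c) *\<^sub>R ones" by (simp add: vec_eq_iff ones_def)
  then show ?thesis by blast
qed

lemma key:
  fixes K :: "real^'n^'n" and mu q :: "real^'n"
  assumes st: "stochastic K" and u: "\<exists>!C. closed_irreducible K C"
    and sd: "stationary_distribution K mu" and h: "mu \<bullet> q = 1/2"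
    and L: "L = mat 1 - K + 2 *\<^sub>R outer (ones - q) (mu v* (diag_mat (ones - q) ** K))"
  shows "invertible L" "(mat 1 - K) *v (matrix_inv L *v q) = 2 *\<^sub>R q - ones"
proof -
  define w where "w = mu v* (diag_mat (ones - q) ** K)"
  have Lx: "L *v x = x - K *v x + (2 * (w \<bullet> x)) *\<^sub>R (ones - q)" for x
    unfolding L w_def
    by (simp add: matrix_vector_mult_diff_rdistrib matrix_vector_mult_add_rdistrib
        outer_mv flip: scaleR_matrix_vector_assoc)
  have muq: "mu \<bullet> (ones - q) = 1/2" using mu_ones[OF sd] h by (simp add: inner_diff_right)
  have muL: "mu \<bullet> (L *v x) = w \<bullet> x" for x
    using muq mu_K[OF sd] by (simp add: Lx inner_add_right inner_diff_right)
  have wones: "w \<bullet> ones = 1/2"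
  proof -
    have "w \<bullet> ones = mu \<bullet> (diag_mat (ones - q) *v (K *v ones))"
      by (simp add: w_def dot_lmul_matrix matrix_vector_mul_assoc)
    also have "diag_mat (ones - q) *v (K *v ones) = ones - q"
      unfolding stoch_ones[OF st] diag_mv by (simp add: vec_eq_iff ones_def)
    finally show ?thesis using muq by simp
  qed
  have inj: "\<forall>x. L *v x = 0 \<longrightarrow> x = 0"
  proof (intro allI impI)
    fix x assume x: "L *v x = 0"
    have "w \<bullet> x = 0" using muL[of x] x by simp
    then have "K *v x = x" using x by (simp add: Lx)
    then obtain c where c: "x = c *\<^sub>R ones" using kernel_const[OF st u] by blast
    have "w \<bullet> x = c / 2" using wones by (simp add: c)
    with \<open>w \<bullet> x = 0\<close> have "c = 0" by simp
    then show "x = 0" using c by simp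
  qed
  then show inv: "invertible L"
    using invertible_left_inverse matrix_left_invertible_ker by blast
  have "L ** matrix_inv L = mat 1"
    using inv unfolding invertible_def matrix_inv_def by (rule someI2_ex) auto
  then have Lq: "L *v (matrix_inv L *v q) = q"
    by (metis matrix_vector_mul_assoc matrix_vector_mul_lid)
  define x where "x = matrix_inv L *v q"
  have wx: "w \<bullet> x = 1/2" using muL[of x] Lq h by (simp add: x_def)
  have Lq': "L *v x = q" using Lq by (simp add: x_def)
  have e1: "x - K *v x + (ones - q) = q" using Lq' unfolding Lx[of x] wx by simp
  have e2: "x - K *v x = 2 *\<^sub>R q - ones"
  proof (rule vec_eq_iff[THEN iffD2], rule allI)
    fix i
    have "(x - K *v x + (ones - q))$i = q$i" using arg_cong[where f="\<lambda>v. v$i", OF e1] .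
    then have "x$i - (K *v x)$i + (ones$i - q$i) = q$i"
      by (simp only: vector_add_component vector_minus_component)
    then show "(x - K *v x)$i = (2 *\<^sub>R q - ones)$i"
      unfolding vector_minus_component vector_scaleR_component real_scaleR_def by linarith
  qed
  then show "(mat 1 - K) *v (matrix_inv L *v q) = 2 *\<^sub>R q - ones"
    unfolding x_def[symmetric] by (simp add: matrix_vector_mult_diff_rdistrib)
qed

theorem lemma4p4:
  fixes K :: "real^'n^'n" and mu p :: "real^'n"
  assumes "stochastic K"
    and "\<exists>!C. closed_irreducible K C"
    and "stationary_distribution K mu"
    and "\<forall>i. 0 < p$i \<and> p$i < 1"
    and "mu \<bullet> p = 1/2"
  shows "r_vec K mu p + r_tilde_vec K mu p = (mu \<bullet> (r_vec K mu p + r_tilde_vec K mu p)) *\<^sub>R ones"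
proof -
  define x where "x = matrix_inv (mat 1 - K + 2 *\<^sub>R outer (ones - p) (mu v* (diag_mat (ones - p) ** K))) *v p"
  define y where "y = matrix_inv (mat 1 - K + 2 *\<^sub>R outer p (mu v* (diag_mat p ** K))) *v (ones - p)"
  have hx: "(mat 1 - K) *v x = 2 *\<^sub>R p - ones"
    using key(2)[OF assms(1-3) assms(5) refl] by (simp add: x_def)
  have h2: "mu \<bullet> (ones - p) = 1/2" using mu_ones[OF assms(3)] assms(5) by (simp add: inner_diff_right)
  have hy: "(mat 1 - K) *v y = 2 *\<^sub>R (ones - p) - ones"
    using key(2)[OF assms(1-3) h2 refl] by (simp add: y_def)
  have hx': "K *v x = x - (2 *\<^sub>R p - ones)" proof -
    have "x - K *v x = 2 *\<^sub>R p - ones" using hx by (simp add: matrix_vector_mult_diff_rdistrib)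
    then have "\<forall>i. x$i - (K *v x)$i = (2 *\<^sub>R p - ones)$i" by (simp add: vec_eq_iff)
    then show ?thesis unfolding vec_eq_iff vector_minus_component by (intro allI) (smt (verit))
  qed
  have hy': "K *v y = y - (2 *\<^sub>R (ones - p) - ones)" proof -
    have "y - K *v y = 2 *\<^sub>R (ones - p) - ones" using hy by (simp add: matrix_vector_mult_diff_rdistrib)
    then have "\<forall>i. y$i - (K *v y)$i = (2 *\<^sub>R (ones - p) - ones)$i" by (simp add: vec_eq_iff)
    then show ?thesis unfolding vec_eq_iff vector_minus_component by (intro allI) (smt (verit))
  qed
  have "K *v (x + y) = x + y"
  proof -
    have "K *v (x + y) = (x - (2 *\<^sub>R p - ones)) + (y - (2 *\<^sub>R (ones - p) - ones))"
      by (simp only: matrix_vector_right_distrib hx' hy')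
    also have "\<dots> = x + y" by (simp add: scaleR_2 vec_eq_iff)
    finally show ?thesis .
  qed
  then obtain c where c: "x + y = c *\<^sub>R ones" using kernel_const[OF assms(1,2)] by blast
  have rr: "r_vec K mu p + r_tilde_vec K mu p = (c - 2) *\<^sub>R ones"
  proof -
    have "x - ones + (y - ones) = (c - 2) *\<^sub>R ones"
    proof (rule vec_eq_iff[THEN iffD2], rule allI)
      fix i
      have "(x + y)$i = (c *\<^sub>R ones)$i" using arg_cong[where f="\<lambda>v. v$i", OF c] .
      then have "x$i + y$i = c" by (simp add: ones_def)
      then show "(x - ones + (y - ones))$i = ((c - 2) *\<^sub>R ones)$i"
        by (simp add: ones_def)
    qed
    then show ?thesis
      unfolding r_vec_def r_tilde_vec_def x_def[symmetric] y_def[symmetric] .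
  qed
  show ?thesis using mu_ones[OF assms(3)] by (simp add: rr)
qed

end
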